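(* Let $q$ be a prime power, let $m, c, h, M$ be positive integers and $\gamma \geq 0$ a real number with $c < \frac{(m-1) - m\gamma}{m} M$. Let $r_1, \ldots, r_m : \mathbb{F}_q \to \mathbb{F}_q$ be functions with $$\left|\{\alpha \in \mathbb{F}_q : r_i(\alpha) \neq r_j(\alpha) \text{ for some } i, j\}\right| \leq \gamma q.$$ Suppose $F_1(X), \ldots, F_m(X) \in \mathbb{F}_q[X]$ satisfy $\deg(F_i) < cq$ and each $F_i$ is an $r_i$-twisted $(h,M)$-pseudopolynomial. Let $k$ be an integer with $$k > \frac{M}{(m - 1 - m\gamma)M - mc}\cdot (h+1).$$ Then there exist $k$-pseudopolynomials $A_1(X), \ldots, A_m(X) \in \mathbb{F}_q[X]$ with $\deg(A_i) < Mq$, not all zero, such that $$\sum_{i=1}^m A_i(X) F_i(X) = 0.$$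
   Context: For $A(X) \in \mathbb{F}_q[X]$, $A^{[\ell]}(X)$ is the $\ell$-th Hasse derivative (the coefficient of $Z^\ell$ in $A(X+Z)$ expanded in powers of $Z$). With $\Lambda(X) = X^q - X$, the $\ell$-th pseudoderivative is $A_{\langle \ell \rangle}(X) = A^{[\ell]}(X) \bmod \Lambda(X)$. The pseudodegree is $\mathsf{pdeg}(A) = \max_{\ell \geq 0}\deg(A_{\langle\ell\rangle})$, and $A$ is a $k$-pseudopolynomial if $\mathsf{pdeg}(A) \leq k$. Given $r : \mathbb{F}_q \to \mathbb{F}_q$, a polynomial $F(X)$ is an $r$-twisted $(h,M)$-pseudopolynomial if for every $\ell$ with $0 \leq \ell < M$ there is $U_\ell(X) \in \mathbb{F}_q[X]$ of degree at most $h$ with $F^{[\ell]}(\alpha) = r(\alpha)\cdot U_\ell(\alpha)$ for all $\alpha \in \mathbb{F}_q$. *)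

theory Defs
  imports "HOL-Computational_Algebra.Polynomial" "HOL-Library.Cardinality" Complex_Main
begin

text \<open>A(X+Z) as a polynomial in Z whose coefficients are polynomials in X.\<close>
definition shift_poly :: "'a::comm_ring_1 poly \<Rightarrow> 'a poly poly" where
  "shift_poly A = pcompose (map_poly (\<lambda>c. [:c:]) A) [: [:0, 1:], 1 :]"

definition hasse :: "nat \<Rightarrow> 'a::comm_ring_1 poly \<Rightarrow> 'a poly" where
  "hasse l A = coeff (shift_poly A) l"

definition Lam :: "'a::{finite,field} poly" where
  "Lam = monom 1 (CARD('a)) - [:0, 1:]"

definition pseudoderiv :: "nat \<Rightarrow> 'a::{finite,field} poly \<Rightarrow> 'a poly" where
  "pseudoderiv l A = hasse l A mod Lam"

definition pseudopoly :: "int \<Rightarrow> 'a::{finite,field} poly \<Rightarrow> bool" where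
  "pseudopoly k A \<longleftrightarrow> (\<forall>l. int (degree (pseudoderiv l A)) \<le> k)"

definition twisted_pseudopoly ::
  "('a::{finite,field} \<Rightarrow> 'a) \<Rightarrow> nat \<Rightarrow> nat \<Rightarrow> 'a poly \<Rightarrow> bool" where
  "twisted_pseudopoly r h M F \<longleftrightarrow>
     (\<forall>l<M. \<exists>U. degree U \<le> h \<and> (\<forall>\<alpha>. poly (hasse l F) \<alpha> = r \<alpha> * poly U \<alpha>))"

end

theory Submission
  imports Defs "HOL-Library.FuncSet"
begin


lemma ff_pow_card:
  fixes x :: "'a::{finite,field}"
  shows "x ^ CARD('a) = x"
proof (cases "x = 0")
  case False
  have "x * (\<Prod>y\<in>UNIV-{0}. x * y) = x * x ^ (card (UNIV :: 'a set) - 1) * \<Prod>(UNIV-{0})"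
    by (simp add: prod.distrib mult_ac)
  also have "x * x ^ (card (UNIV :: 'a set) - 1) = x ^ Suc (card (UNIV :: 'a set) - 1)"
    by (subst power_Suc) auto
  also have "Suc (card (UNIV :: 'a set) - 1) = card (UNIV :: 'a set)"
    using finite_UNIV_card_ge_0[where ?'a = 'a] by simp
  also have "(\<Prod>y\<in>UNIV-{0}. x * y) = (\<Prod>y\<in>UNIV-{0}. y)"
    by (rule prod.reindex_bij_witness[of _ "\<lambda>y. y / x" "\<lambda>y. x * y"]) (use False in auto)
  finally show ?thesis
    by simp
qed (use finite_UNIV_card_ge_0[where ?'a = 'a] in auto)

lemma card_ge2: "CARD('a::{finite,field}) \<ge> 2"
proof -
  have "{0, 1::'a} \<subseteq> UNIV" by simp
  hence "card {0,1::'a} \<le> CARD('a)" by (intro card_mono) auto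
  thus ?thesis by simp
qed

lemma choose_zero:
  assumes "0 < l" "l < CARD('a::{finite,field})"
  shows "of_nat (CARD('a) choose l) = (0::'a)"
proof -
  define q where "q = CARD('a)"
  define P :: "'a poly" where "P = ([:0,1:] + 1)^q - monom 1 q - 1"
  have expand: "([:0,1:] + 1)^q = (\<Sum>k\<le>q. monom (of_nat (q choose k)) k :: 'a poly)"
    by (simp add: binomial_ring monom_altdef of_nat_poly)
  have cP: "coeff P i = (if i \<le> q then of_nat (q choose i) else 0) - (if i = q then 1 else 0) - (if i = 0 then 1 else 0)" for i
    unfolding P_def expand by (simp add: coeff_sum coeff_monom coeff_1)
  have roots: "poly P x = 0" for x
    unfolding P_def using ff_pow_card[of x] ff_pow_card[of "x+1"] by (simp add: poly_monom q_def)
  have "P = 0"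
  proof (rule ccontr)
    assume nz: "P \<noteq> 0"
    have "degree P < q"
    proof -
      have "q > 0" using card_ge2[where 'a='a] q_def by simp
      moreover have "\<forall>i\<ge>q. coeff P i = 0" using cP \<open>q > 0\<close> by auto
      ultimately show ?thesis using nz
        by (metis leading_coeff_0_iff le_degree not_less)
    qed
    moreover have "card {x. poly P x = 0} \<le> degree P" by (rule card_poly_roots_bound[OF nz])
    ultimately show False using roots q_def by simp
  qed
  hence "coeff P l = 0" by simp
  thus ?thesis using cP[of l] assms q_def by simp
qed

lemma frob_gen:
  fixes x y :: "'b::comm_ring_1"
  assumes "\<And>l. 0 < l \<Longrightarrow> l < n \<Longrightarrow> of_nat (n choose l) = (0::'b)" "n > 0"
  shows "(x + y)^n = x^n + y^n"
proof -
  have "(x + y)^n = (\<Sum>k\<le>n. of_nat (n choose k) * x ^ k * y ^ (n - k))" by (rule binomial_ring)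
  also have "\<dots> = (\<Sum>k\<in>{0,n}. of_nat (n choose k) * x ^ k * y ^ (n - k))"
    by (rule sum.mono_neutral_right) (use assms in auto)
  finally show ?thesis using assms(2) by (simp add: add.commute)
qed

lemma frob_pp:
  fixes x y :: "'a::{finite,field} poly poly"
  shows "(x + y)^CARD('a) = x^CARD('a) + y^CARD('a)"
proof (rule frob_gen)
  fix l assume "0 < l" "l < CARD('a)"
  hence "of_nat (CARD('a) choose l) = (0::'a)" by (rule choose_zero)
  thus "of_nat (CARD('a) choose l) = (0::'a poly poly)" by (simp add: of_nat_poly)
next
  show "CARD('a) > 0" by simp
qed



lemma map_poly_add_gen:
  assumes "\<And>x y. f (x + y) = f x + f y" "f 0 = 0"
  shows "map_poly f (p + q) = map_poly f p + map_poly f q"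
  by (intro poly_eqI) (simp add: coeff_map_poly assms)

lemma map_poly_mult_gen:
  fixes f :: "'b::comm_semiring_1 \<Rightarrow> 'c::comm_semiring_1"
  assumes add: "\<And>x y. f (x + y) = f x + f y" and mul: "\<And>x y. f (x * y) = f x * f y" and z: "f 0 = 0"
  shows "map_poly f (p * q) = map_poly f p * map_poly f q"
proof (induction p)
  case 0 then show ?case by simp
next
  case (pCons a p)
  have "pCons a p * q = smult a q + pCons 0 (p * q)" by (simp add: mult_pCons_left)
  hence "map_poly f (pCons a p * q) = smult (f a) (map_poly f q) + pCons 0 (map_poly f (p * q))"
    by (simp add: map_poly_add_gen[OF add z] map_poly_smult[OF z mul] map_poly_pCons z)
  also have "\<dots> = map_poly f (pCons a p) * map_poly f q"
    using pCons.IH by (simp add: map_poly_pCons z mult_pCons_left)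
  finally show ?case .
qed

lemma map_poly_pcompose_gen:
  fixes f :: "'b::comm_semiring_1 \<Rightarrow> 'c::comm_semiring_1"
  assumes add: "\<And>x y. f (x + y) = f x + f y" and mul: "\<And>x y. f (x * y) = f x * f y" and z: "f 0 = 0"
  shows "map_poly f (pcompose p q) = pcompose (map_poly f p) (map_poly f q)"
proof (induction p)
  case 0 then show ?case by simp
next
  case (pCons a p)
  show ?case
    by (simp add: pcompose_pCons map_poly_add_gen[OF add z] map_poly_mult_gen[OF add mul z]
        map_poly_pCons z pCons.IH)
qed

abbreviation CC :: "'a::comm_ring_1 poly \<Rightarrow> 'a poly poly" where
  "CC p \<equiv> map_poly (\<lambda>c. [:c:]) p"

abbreviation WW :: "'a::comm_ring_1 poly poly" where
  "WW \<equiv> [: [:0, 1:], 1 :]"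

lemma CC_add: "CC (p + q) = CC p + CC q"
  by (rule map_poly_add_gen) auto
lemma CC_mult: "CC (p * q) = CC p * CC q"
  by (rule map_poly_mult_gen) auto
lemma CC_diff: "CC (p - q) = CC p - CC q"
  by (intro poly_eqI) (simp add: coeff_map_poly)
lemma CC_smult: "CC (smult a p) = smult [:a:] (CC p)"
  by (rule map_poly_smult) auto

lemma shift_add: "shift_poly (p + q) = shift_poly p + shift_poly q"
  unfolding shift_poly_def by (simp add: CC_add pcompose_add)
lemma shift_diff: "shift_poly (p - q) = shift_poly p - shift_poly q"
  unfolding shift_poly_def by (simp add: CC_diff pcompose_diff)
lemma shift_mult: "shift_poly (p * q) = shift_poly p * shift_poly q"
  unfolding shift_poly_def by (simp add: CC_mult pcompose_mult)
lemma shift_smult: "shift_poly (smult a p) = smult [:a:] (shift_poly p)"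
  unfolding shift_poly_def by (simp add: CC_smult pcompose_smult)
lemma shift_0: "shift_poly 0 = 0"
  unfolding shift_poly_def by simp
lemma shift_X: "shift_poly [:0,1:] = WW"
  unfolding shift_poly_def by (simp add: map_poly_pCons pcompose_pCons)
lemma shift_const: "shift_poly [:a:] = [:[:a:]:]"
  unfolding shift_poly_def by (simp add: map_poly_pCons)
lemma shift_1: "shift_poly 1 = 1"
  unfolding shift_poly_def by (simp add: pcompose_1)
lemma shift_power: "shift_poly (p ^ n) = shift_poly p ^ n"
  by (induction n) (simp_all add: shift_mult shift_1)

lemma hasse_add: "hasse l (p + q) = hasse l p + hasse l q"
  unfolding hasse_def by (simp add: shift_add)
lemma hasse_diff: "hasse l (p - q) = hasse l p - hasse l q"
  unfolding hasse_def by (simp add: shift_diff)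
lemma hasse_smult: "hasse l (smult a p) = smult a (hasse l p)"
  unfolding hasse_def by (simp add: shift_smult)
lemma hasse_0: "hasse l 0 = 0"
  unfolding hasse_def by (simp add: shift_0)
lemma hasse_sum: "hasse l (sum f A) = (\<Sum>x\<in>A. hasse l (f x))"
  by (induction A rule: infinite_finite_induct) (simp_all add: hasse_0 hasse_add)
lemma hasse_mult: "hasse l (p * q) = (\<Sum>i\<le>l. hasse i p * hasse (l - i) q)"
  unfolding hasse_def by (simp add: shift_mult coeff_mult)

lemma taylor_coeff:
  fixes G :: "'a::comm_ring_1 poly"
  shows "coeff (pcompose G [:a, 1:]) l = poly (hasse l G) a"
proof -
  define ev where "ev = (\<lambda>p::'a poly. poly p a)"
  have e1: "\<And>x y. ev (x + y) = ev x + ev y" "\<And>x y. ev (x * y) = ev x * ev y" "ev 0 = 0"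
    by (simp_all add: ev_def)
  have "map_poly ev (shift_poly G) = pcompose (map_poly ev (CC G)) (map_poly ev WW)"
    unfolding shift_poly_def by (rule map_poly_pcompose_gen[OF e1])
  also have "map_poly ev (CC G) = G"
    by (simp add: map_poly_map_poly ev_def o_def)
  also have "map_poly ev WW = [:a, 1:]"
    by (simp add: map_poly_pCons ev_def)
  finally have "map_poly ev (shift_poly G) = pcompose G [:a, 1:]" .
  hence "coeff (pcompose G [:a, 1:]) l = ev (coeff (shift_poly G) l)"
    by (metis coeff_map_poly e1(3))
  thus ?thesis by (simp add: ev_def hasse_def)
qed

lemma Xpow_dvd:
  fixes T :: "'a::comm_ring_1 poly"
  shows "(\<forall>l<M. coeff T l = 0) \<Longrightarrow> [:0,1:]^M dvd T"
proof (induction M arbitrary: T)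
  case 0 then show ?case by simp
next
  case (Suc M)
  obtain a T' where T: "T = pCons a T'" by (cases T)
  have "a = 0" using Suc.prems T by (metis coeff_pCons_0 zero_less_Suc)
  have "\<forall>l<M. coeff T' l = 0" using Suc.prems T by auto
  hence "[:0,1:]^M dvd T'" by (rule Suc.IH)
  moreover have "T = [:0,1:] * T'" using T \<open>a = 0\<close> by (simp add: mult_pCons_left)
  ultimately show ?case by (metis mult_dvd_mono power_Suc dvd_refl)
qed

lemma pcompose_Xpow: "pcompose ([:0,1:]^n) q = q ^ n"
  by (induction n) (simp_all add: pcompose_mult pcompose_1 pcompose_pCons)

lemma taylor_dvd:
  fixes G :: "'a::comm_ring_1 poly"
  assumes "\<forall>l<M. poly (hasse l G) a = 0"
  shows "[:-a, 1:]^M dvd G"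
proof -
  define T where "T = pcompose G [:a, 1:]"
  have "\<forall>l<M. coeff T l = 0" using assms taylor_coeff T_def by metis
  then obtain T' where T': "T = [:0,1:]^M * T'" using Xpow_dvd by (metis dvd_def)
  have "pcompose T [:-a, 1:] = G"
    unfolding T_def by (simp add: pcompose_assoc[symmetric] pcompose_pCons)
  moreover have "pcompose T [:-a, 1:] = [:-a,1:]^M * pcompose T' [:-a, 1:]"
    by (simp add: T' pcompose_mult pcompose_Xpow)
  ultimately show ?thesis by (metis dvd_triv_left)
qed

lemma mult_count:
  fixes G :: "'a::idom poly"
  assumes "finite S" "\<forall>a\<in>S. [:-a, 1:]^M dvd G" "G \<noteq> 0"
  shows "M * card S \<le> degree G"
proof -
  have "\<forall>a\<in>S. M \<le> count (proots G) a" using assms by (simp add: order_divides)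
  hence "M * card S \<le> sum (count (proots G)) S"
    using sum_mono[of S "\<lambda>_. M" "count (proots G)"] by (simp add: mult.commute)
  also have "\<dots> \<le> sum (count (proots G)) (S \<union> set_mset (proots G))"
    by (rule sum_mono2) (use assms poly_roots_finite in auto)
  also have "\<dots> = sum (count (proots G)) (set_mset (proots G))"
    by (rule sum.mono_neutral_right) (use assms poly_roots_finite order_gt_0_iff in auto)
  also have "\<dots> = size (proots G)" by (simp add: size_multiset_overloaded_eq)
  also have "\<dots> \<le> degree G" by (rule size_proots_le)
  finally show ?thesis .
qed



lemma Lam_alt: "(Lam :: 'a::{finite,field} poly) = [:0,1:]^CARD('a) - [:0,1:]"
  unfolding Lam_def by (simp add: monom_altdef)

lemma degree_Lam: "degree (Lam :: 'a::{finite,field} poly) = CARD('a)"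
proof -
  have "degree ([:0,1:] :: 'a poly) < degree (monom (1::'a) CARD('a))"
    using card_ge2[where 'a='a] by (simp add: degree_monom_eq)
  hence "degree (monom (1::'a) CARD('a) + - [:0,1:]) = CARD('a)"
    by (subst degree_add_eq_left) (simp_all add: degree_monom_eq)
  thus ?thesis unfolding Lam_def by (metis diff_conv_add_uminus)
qed

lemma Lam_nz: "(Lam :: 'a::{finite,field} poly) \<noteq> 0"
  using degree_Lam[where 'a='a] card_ge2[where 'a='a] by auto

lemma poly_Lam: "poly (Lam :: 'a::{finite,field} poly) x = 0"
  unfolding Lam_def by (simp add: poly_monom ff_pow_card)

lemma poly_mod_Lam: "poly (p mod (Lam :: 'a::{finite,field} poly)) x = poly p x"
proof -
  have "p = (p div Lam) * Lam + p mod Lam" by simp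
  hence "poly p x = poly (p div Lam) x * poly Lam x + poly (p mod Lam) x"
    by (metis poly_add poly_mult)
  thus ?thesis by (simp add: poly_Lam)
qed

lemma poly_pseudoderiv: "poly (pseudoderiv l p) x = poly (hasse l (p :: 'a::{finite,field} poly)) x"
  unfolding pseudoderiv_def by (rule poly_mod_Lam)

lemma pseudoderiv_diff: "pseudoderiv l (p - q) = pseudoderiv l p - pseudoderiv l q"
  unfolding pseudoderiv_def by (simp add: hasse_diff poly_mod_diff_left)
lemma pseudoderiv_add: "pseudoderiv l (p + q) = pseudoderiv l p + pseudoderiv l q"
  unfolding pseudoderiv_def by (simp add: hasse_add poly_mod_add_left)
lemma pseudoderiv_smult: "pseudoderiv l (smult a p) = smult a (pseudoderiv l p)"
  unfolding pseudoderiv_def by (simp add: hasse_smult mod_smult_left)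
lemma pseudoderiv_0: "pseudoderiv l 0 = 0"
  unfolding pseudoderiv_def by (simp add: hasse_0)



definition cdeg :: "nat \<Rightarrow> 'a::comm_ring_1 poly poly \<Rightarrow> bool" where
  "cdeg d P \<longleftrightarrow> (\<forall>l. degree (coeff P l) \<le> d)"

lemma cdeg_mult:
  assumes "cdeg a P" "cdeg b Q" shows "cdeg (a + b) (P * Q)"
  unfolding cdeg_def
proof
  fix l
  show "degree (coeff (P * Q) l) \<le> a + b"
    unfolding coeff_mult
  proof (rule degree_sum_le)
    fix i
    have "degree (coeff P i * coeff Q (l - i)) \<le> degree (coeff P i) + degree (coeff Q (l - i))"
      by (rule degree_mult_le)
    also have "\<dots> \<le> a + b" using assms unfolding cdeg_def by (meson add_mono)
    finally show "degree (coeff P i * coeff Q (l - i)) \<le> a + b" .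
  qed simp
qed

lemma cdeg_mono: "cdeg a P \<Longrightarrow> a \<le> b \<Longrightarrow> cdeg b P"
  unfolding cdeg_def using order_trans by blast

lemma cdeg_power: "cdeg d P \<Longrightarrow> cdeg (n * d) (P ^ n)"
proof (induction n)
  case 0
  have "degree (coeff (1::'a poly poly) l) \<le> 0" for l by (simp add: coeff_1)
  then show ?case by (simp add: cdeg_def)
next
  case (Suc n)
  then show ?case using cdeg_mult[of d P "n * d" "P ^ n"] by simp
qed

lemma cdeg_WW: "cdeg 1 (WW :: 'a::comm_ring_1 poly poly)"
  unfolding cdeg_def
proof
  fix l show "degree (coeff (WW :: 'a poly poly) l) \<le> 1"
    by (cases l; cases "l - 1") (auto simp: coeff_pCons)
qed

abbreviation LL :: "'a::{finite,field} poly poly" where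
  "LL \<equiv> [:0,1:]^CARD('a) - [:0,1:]"

lemma cdeg_LL: "cdeg 0 (LL :: 'a::{finite,field} poly poly)"
  unfolding cdeg_def
proof
  fix l
  have "([:0,1:] :: 'a poly poly)^CARD('a) = monom 1 CARD('a)" by (simp add: monom_altdef)
  hence "coeff (LL :: 'a poly poly) l = (if CARD('a) = l then 1 else 0) - coeff [:0,1:] l"
    by (simp add: coeff_monom)
  moreover have "degree (coeff ([:0,1:] :: 'a poly poly) l) \<le> 0"
    by (cases l; cases "l - 1") (auto simp: coeff_pCons)
  moreover have "degree ((if CARD('a) = l then 1 else 0) :: 'a poly) \<le> 0" by simp
  ultimately show "degree (coeff (LL :: 'a poly poly) l) \<le> 0"
    by (metis degree_diff_le)
qed



lemma shift_Lam: "shift_poly (Lam :: 'a::{finite,field} poly) = [:Lam:] + LL"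
proof -
  have W: "(WW :: 'a poly poly) = [:[:0,1:]:] + [:0,1:]" by simp
  have "shift_poly (Lam :: 'a poly) = WW ^ CARD('a) - WW"
    unfolding Lam_alt by (simp add: shift_diff shift_power shift_X)
  also have "WW ^ CARD('a) = [:[:0,1:]:] ^ CARD('a) + ([:0,1:] :: 'a poly poly) ^ CARD('a)"
    unfolding W by (rule frob_pp)
  also have "[:[:0,1:]:] ^ CARD('a) = [:[:0,1:] ^ CARD('a) :: 'a poly:]"
    by (simp add: poly_const_pow)
  finally show ?thesis unfolding Lam_alt by simp
qed


lemma dvd_binom_diff: "(x::'b::comm_ring_1) dvd (x + y)^j - y^j"
proof (induction j)
  case 0 then show ?case by simp
next
  case (Suc j)
  then obtain r where r: "(x + y)^j - y^j = x * r" by (auto simp: dvd_def)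
  have "(x + y)^Suc j - y^Suc j = (x + y) * ((x + y)^j - y^j) + x * y^j"
    by (simp add: algebra_simps)
  also have "\<dots> = x * ((x + y) * r + y^j)" unfolding r by (simp add: algebra_simps)
  finally show ?case by simp
qed



lemma pseudoderiv_XLam:
  fixes a j :: nat
  assumes "a < CARD('a::{finite,field})"
  shows "degree (pseudoderiv l ([:0,1:]^a * Lam^j :: 'a poly)) \<le> a"
proof -
  have sh: "shift_poly ([:0,1:]^a * Lam^j :: 'a poly) = WW^a * ([:Lam:] + LL)^j"
    unfolding shift_mult shift_power shift_X shift_Lam ..
  have "[:Lam:] dvd ([:Lam:] + LL)^j - (LL :: 'a poly poly)^j"
    by (rule dvd_binom_diff)
  then obtain R where R: "([:Lam:] + LL)^j - LL^j = [:Lam:] * (R :: 'a poly poly)"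
    unfolding dvd_def by blast
  have R': "([:Lam:] + LL)^j = LL^j + [:Lam:] * (R :: 'a poly poly)"
    using R by (metis add.commute diff_add_cancel)
  have "shift_poly ([:0,1:]^a * Lam^j :: 'a poly) = WW^a * LL^j + smult Lam (WW^a * R)"
  proof -
    have "WW^a * ([:Lam:] * R) = [:Lam:] * (WW^a * R)" by (simp only: mult.left_commute)
    also have "\<dots> = smult Lam (WW^a * R)" by simp
    finally show ?thesis unfolding sh R' by (simp only: distrib_left)
  qed
  hence hl: "hasse l ([:0,1:]^a * Lam^j :: 'a poly) = coeff (WW^a * LL^j) l + Lam * coeff (WW^a * R) l"
    unfolding hasse_def by (simp only: coeff_add coeff_smult)
  have cd: "cdeg (a * 1 + j * 0) (WW^a * LL^j :: 'a poly poly)"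
    by (rule cdeg_mult[OF cdeg_power[OF cdeg_WW] cdeg_power[OF cdeg_LL]])
  hence dg: "degree (coeff (WW^a * LL^j :: 'a poly poly) l) \<le> a" by (simp add: cdeg_def)
  have "pseudoderiv l ([:0,1:]^a * Lam^j :: 'a poly) = coeff (WW^a * LL^j) l mod Lam"
    unfolding pseudoderiv_def hl by (simp only: poly_mod_add_left mod_mult_self1_is_0 add_0_right)
  also have "\<dots> = coeff (WW^a * LL^j) l"
    by (rule mod_poly_less) (use dg assms degree_Lam[where 'a='a] in linarith)
  finally show ?thesis using dg by simp
qed



lemma indep_distinct_degrees:
  fixes b :: "'t \<Rightarrow> 'a::field poly"
  assumes fin: "finite J" and nz: "\<forall>t\<in>J. b t \<noteq> 0" and inj: "inj_on (\<lambda>t. degree (b t)) J"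
    and sum0: "(\<Sum>t\<in>J. smult (c t) (b t)) = 0"
  shows "\<forall>t\<in>J. c t = 0"
proof (rule ccontr)
  assume "\<not> (\<forall>t\<in>J. c t = 0)"
  define NZ where "NZ = {t\<in>J. c t \<noteq> 0}"
  have NZne: "NZ \<noteq> {}" and NZfin: "finite NZ"
    using \<open>\<not> (\<forall>t\<in>J. c t = 0)\<close> fin unfolding NZ_def by auto
  define d0 where "d0 = Max ((\<lambda>t. degree (b t)) ` NZ)"
  have "d0 \<in> (\<lambda>t. degree (b t)) ` NZ" unfolding d0_def using NZne NZfin by (intro Max_in) auto
  then obtain t0 where t0: "t0 \<in> NZ" "degree (b t0) = d0" by auto
  have le: "degree (b t) \<le> d0" if "t \<in> NZ" for t
    unfolding d0_def using NZfin that by (intro Max_ge) auto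
  have "coeff (\<Sum>t\<in>J. smult (c t) (b t)) d0 = (\<Sum>t\<in>J. c t * coeff (b t) d0)"
    by (simp add: coeff_sum)
  also have "\<dots> = (\<Sum>t\<in>{t0}. c t * coeff (b t) d0)"
  proof (rule sum.mono_neutral_right)
    show "finite J" by fact
    show "{t0} \<subseteq> J" using t0 NZ_def by auto
    show "\<forall>t\<in>J - {t0}. c t * coeff (b t) d0 = 0"
    proof
      fix t assume t: "t \<in> J - {t0}"
      show "c t * coeff (b t) d0 = 0"
      proof (cases "c t = 0")
        case False
        hence "t \<in> NZ" using t NZ_def by auto
        hence "degree (b t) \<le> d0" by (rule le)
        moreover have "degree (b t) \<noteq> d0"
          using inj t t0 NZ_def unfolding inj_on_def by auto
        ultimately have "coeff (b t) d0 = 0" by (simp add: coeff_eq_0)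
        thus ?thesis by simp
      qed simp
    qed
  qed
  also have "\<dots> = c t0 * lead_coeff (b t0)" using t0 by simp
  also have "\<dots> \<noteq> 0" using t0 nz NZ_def by auto
  finally show False using sum0 by simp
qed

lemma card_J_bound:
  fixes q kn D :: nat
  assumes "kn < q"
  shows "kn * D \<le> q * card {(a, j). a \<le> kn \<and> a + j * q < D}"
proof -
  define J0 where "J0 = D div q"
  define \<rho> where "\<rho> = D mod q"
  have q0: "q > 0" using assms by simp
  have D: "D = J0 * q + \<rho>" unfolding J0_def \<rho>_def by simp
  have \<rho>q: "\<rho> < q" unfolding \<rho>_def using q0 by simp
  define S1 where "S1 = {..kn} \<times> {..<J0}"
  define S2 where "S2 = {..<min \<rho> (kn+1)} \<times> {J0}"
  have sub: "S1 \<union> S2 \<subseteq> {(a, j). a \<le> kn \<and> a + j * q < D}"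
  proof
    fix x assume "x \<in> S1 \<union> S2"
    then obtain a j where x: "x = (a, j)" and cases: "(a \<le> kn \<and> j < J0) \<or> (a < min \<rho> (kn+1) \<and> j = J0)"
      unfolding S1_def S2_def by auto
    show "x \<in> {(a, j). a \<le> kn \<and> a + j * q < D}"
    proof (cases "a \<le> kn \<and> j < J0")
      case True
      hence "a + j * q < q + j * q" using assms by simp
      also have "\<dots> = (Suc j) * q" by simp
      also have "\<dots> \<le> J0 * q" using True by (intro mult_right_mono) auto
      finally show ?thesis using x True D by simp
    next
      case False
      hence "a < min \<rho> (kn+1) \<and> j = J0" using cases by auto
      thus ?thesis using x D by auto
    qed
  qed
  have fin: "finite {(a, j). a \<le> kn \<and> a + j * q < D}"
  proof (rule finite_subset[of _ "{..kn} \<times> {..D}"])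
    show "{(a, j). a \<le> kn \<and> a + j * q < D} \<subseteq> {..kn} \<times> {..D}"
    proof clarify
      fix a j assume "a \<le> kn" "a + j * q < D"
      moreover have "j \<le> j * q" using q0 by simp
      ultimately have "j < D" by linarith
      thus "a \<in> {..kn} \<and> j \<in> {..D}" using \<open>a \<le> kn\<close> by auto
    qed
  qed auto
  have disj: "S1 \<inter> S2 = {}" unfolding S1_def S2_def by auto
  have "card (S1 \<union> S2) = (kn+1) * J0 + min \<rho> (kn+1)"
    using disj unfolding S1_def S2_def by (subst card_Un_disjoint) (auto simp: card_cartesian_product)
  hence cge: "(kn+1) * J0 + min \<rho> (kn+1) \<le> card {(a, j). a \<le> kn \<and> a + j * q < D}"
    using card_mono[OF fin sub] by simp
  have "kn * \<rho> \<le> q * min \<rho> (kn+1)"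
  proof (cases "\<rho> \<le> kn + 1")
    case True
    thus ?thesis using assms by (simp add: min_def mult.commute mult_le_mono1)
  next
    case False
    hence "kn * \<rho> \<le> kn * q" using \<rho>q by simp
    also have "\<dots> \<le> q * (kn + 1)" by simp
    finally show ?thesis using False by (simp add: min_def)
  qed
  hence "kn * D \<le> q * ((kn+1) * J0 + min \<rho> (kn+1))"
    unfolding D by (simp add: algebra_simps)
  also have "\<dots> \<le> q * card {(a, j). a \<le> kn \<and> a + j * q < D}"
    using cge by simp
  finally show ?thesis .
qed

lemma card_Tgt:
  fixes M d :: nat
  defines "Tgt \<equiv> {f :: nat \<Rightarrow> 'a::{finite,field} poly. \<forall>l. (l < M \<longrightarrow> degree (f l) \<le> d) \<and> (M \<le> l \<longrightarrow> f l = 0)}"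
  shows "finite Tgt \<and> card Tgt \<le> CARD('a) ^ (M * (d + 1))"
proof -
  define I where "I = {..<M} \<times> {..d}"
  define enc where "enc = (\<lambda>f::nat \<Rightarrow> 'a poly. restrict (\<lambda>(l, e). coeff (f l) e) I)"
  have inj: "inj_on enc Tgt"
  proof (rule inj_onI)
    fix f g assume f: "f \<in> Tgt" and g: "g \<in> Tgt" and encEq: "enc f = enc g"
    show "f = g"
    proof
      fix l show "f l = g l"
      proof (cases "l < M")
        case True
        show ?thesis
        proof (rule poly_eqI)
          fix e show "coeff (f l) e = coeff (g l) e"
          proof (cases "e \<le> d")
            case True
            hence "(l, e) \<in> I" using \<open>l < M\<close> I_def by auto
            moreover have "enc f (l, e) = enc g (l, e)" using encEq by simp
            ultimately show ?thesis unfolding enc_def by simp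
          next
            case False
            hence "degree (f l) < e" "degree (g l) < e" using f g \<open>l < M\<close> unfolding Tgt_def by (auto simp: not_le)
            thus ?thesis by (simp add: coeff_eq_0)
          qed
        qed
      next
        case False thus ?thesis using f g unfolding Tgt_def by auto
      qed
    qed
  qed
  have img: "enc ` Tgt \<subseteq> PiE I (\<lambda>_. UNIV)" unfolding enc_def by auto
  have finPi: "finite (PiE I (\<lambda>_. UNIV :: 'a set))" unfolding I_def by (intro finite_PiE) auto
  have "finite Tgt" using inj img finPi inj_on_finite by blast
  moreover have "card Tgt \<le> card (PiE I (\<lambda>_. UNIV :: 'a set))"
    using card_inj_on_le[OF inj img finPi] .
  moreover have "card (PiE I (\<lambda>_. UNIV :: 'a set)) = CARD('a) ^ (M * (d + 1))"
    unfolding I_def by (subst card_PiE) (auto simp: card_cartesian_product)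
  ultimately show ?thesis by simp
qed



lemma arith1:
  fixes m c M q B :: nat and \<gamma> :: real
  assumes "m > 0" "c > 0" "M > 0" "\<gamma> \<ge> 0" "q > 0" "B \<le> q"
    and hc: "real c < ((real m - 1) - real m * \<gamma>) / real m * real M"
    and hB: "real B \<le> \<gamma> * real q"
  shows "c * q < M * (q - B)" "m \<ge> 2" "c < M"
    "(real m - 1 - real m * \<gamma>) * real M - real m * real c > 0"
proof -
  have mpos: "real m > 0" using assms by simp
  have hc': "real m * real c < ((real m - 1) - real m * \<gamma>) * real M"
    using hc mpos by (simp add: field_simps)
  show Dp: "(real m - 1 - real m * \<gamma>) * real M - real m * real c > 0" using hc' by simp
  have "((real m - 1) - real m * \<gamma>) * real M \<le> (real m - real m * \<gamma>) * real M"
    using assms by (intro mult_right_mono) auto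
  also have "\<dots> = real m * ((1 - \<gamma>) * real M)" by (simp add: algebra_simps)
  finally have "real m * real c < real m * ((1 - \<gamma>) * real M)" using hc' by simp
  hence c1: "real c < (1 - \<gamma>) * real M" using mpos by simp
  have "real c * real q < (1 - \<gamma>) * real M * real q" using c1 assms by simp
  also have "\<dots> = real M * (real q - \<gamma> * real q)" by (simp add: algebra_simps)
  also have "\<dots> \<le> real M * (real q - real B)" using hB by (intro mult_left_mono) auto
  finally have "real (c * q) < real (M * (q - B))" using assms by (simp add: of_nat_diff)
  thus "c * q < M * (q - B)" by linarith
  have "(1 - \<gamma>) * real M \<le> real M" using assms by (simp add: algebra_simps)
  hence "real c < real M" using c1 by linarith
  thus "c < M" by simp
  show "m \<ge> 2"
  proof (rule ccontr)
    assume "\<not> m \<ge> 2" hence "m = 1" using assms by simp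
    hence "((real m - 1) - real m * \<gamma>) * real M \<le> 0" using assms by simp
    thus False using hc' assms by (metis mult_nonneg_nonneg of_nat_0_le_iff not_less order_less_le_trans)
  qed
qed


lemma arith2:
  fixes m c M q B h kn cJ D :: nat and \<gamma> :: real
  assumes "m > 0" "c > 0" "M > 0" "\<gamma> \<ge> 0" "q > 0" "B \<le> q"
    and hB: "real B \<le> \<gamma> * real q"
    and Dp: "(real m - 1 - real m * \<gamma>) * real M - real m * real c > 0"
    and hk: "real kn > real M / ((real m - 1 - real m * \<gamma>) * real M - real m * real c) * (real h + 1)"
    and hJ: "kn * D \<le> q * cJ"
    and hD: "D = M * (q - B) - c * q" "c * q < M * (q - B)"
  shows "M * (kn + h + 1) < m * cJ"
proof -
  define \<Delta> where "\<Delta> = (real m - 1 - real m * \<gamma>) * real M - real m * real c"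
  have "real kn * \<Delta> > real M * (real h + 1)"
    using hk Dp unfolding \<Delta>_def by (simp add: field_simps)
  hence key: "real m * real kn * ((1 - \<gamma>) * real M - real c) > real M * (real kn + real h + 1)"
    unfolding \<Delta>_def by (simp add: algebra_simps)
  have Dr: "real D = real M * (real q - real B) - real c * real q"
    using hD by (simp add: of_nat_diff)
  have "real D \<ge> real q * ((1 - \<gamma>) * real M - real c)"
  proof -
    have "real M * (real q - real B) \<ge> real M * (real q - \<gamma> * real q)"
      using hB by (intro mult_left_mono) auto
    thus ?thesis unfolding Dr by (simp add: algebra_simps)
  qed
  hence "real kn * real D \<ge> real kn * (real q * ((1 - \<gamma>) * real M - real c))"
    by (intro mult_left_mono) auto
  hence "real q * real cJ \<ge> real q * (real kn * ((1 - \<gamma>) * real M - real c))"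
  proof -
    have "real kn * real D \<le> real q * real cJ" using hJ by (metis of_nat_le_iff of_nat_mult)
    thus ?thesis using \<open>real kn * real D \<ge> _\<close> by (simp add: algebra_simps)
  qed
  hence "real cJ \<ge> real kn * ((1 - \<gamma>) * real M - real c)"
    using assms by (simp add: mult_le_cancel_left)
  hence "real m * real cJ \<ge> real m * real kn * ((1 - \<gamma>) * real M - real c)"
    by (simp add: mult.assoc mult_left_mono)
  hence "real m * real cJ > real M * (real kn + real h + 1)" using key by linarith
  hence "real (M * (kn + h + 1)) < real (m * cJ)" by (simp add: algebra_simps)
  thus ?thesis by linarith
qed



lemma pseudoderiv_sum: "pseudoderiv l (sum f A) = (\<Sum>x\<in>A. pseudoderiv l (f x))"
  by (induction A rule: infinite_finite_induct) (simp_all add: pseudoderiv_0 pseudoderiv_add)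

lemma all_pseudopoly:
  assumes "k \<ge> int CARD('a::{finite,field}) - 1"
  shows "pseudopoly k (p :: 'a poly)"
  unfolding pseudopoly_def
proof
  fix l
  have "degree (pseudoderiv l p) \<le> CARD('a) - 1"
  proof (cases "pseudoderiv l p = 0")
    case False
    hence "degree (pseudoderiv l p) < degree (Lam :: 'a poly)"
      unfolding pseudoderiv_def using degree_mod_less'[OF Lam_nz] by blast
    thus ?thesis using degree_Lam[where 'a='a] by simp
  qed simp
  thus "int (degree (pseudoderiv l p)) \<le> k" using assms card_ge2[where 'a='a] by linarith
qed

lemma finite_J: "q > 0 \<Longrightarrow> finite {(a, j). a \<le> (kn::nat) \<and> a + j * q < (D::nat)}"
proof (rule finite_subset[of _ "{..kn} \<times> {..D}"])
  assume q0: "q > 0"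
  show "{(a, j). a \<le> kn \<and> a + j * q < D} \<subseteq> {..kn} \<times> {..D}"
  proof clarify
    fix a j assume "a \<le> kn" "a + j * q < D"
    moreover have "j \<le> j * q" using q0 by simp
    ultimately have "j < D" by linarith
    thus "a \<in> {..kn} \<and> j \<in> {..D}" using \<open>a \<le> kn\<close> by auto
  qed
qed auto

theorem lemma5p8:
  fixes r :: "nat \<Rightarrow> 'a::{finite,field} \<Rightarrow> 'a"
    and F :: "nat \<Rightarrow> 'a poly"
    and m c h M :: nat and \<gamma> :: real and k :: int
  assumes "m > 0" "c > 0" "h > 0" "M > 0" "\<gamma> \<ge> 0"
    and "real c < ((real m - 1) - real m * \<gamma>) / real m * real M"
    and "real (card {\<alpha>::'a. \<exists>i\<in>{1..m}. \<exists>j\<in>{1..m}. r i \<alpha> \<noteq> r j \<alpha>})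
           \<le> \<gamma> * real CARD('a)"
    and "\<forall>i\<in>{1..m}. degree (F i) < c * CARD('a)"
    and "\<forall>i\<in>{1..m}. twisted_pseudopoly (r i) h M (F i)"
    and "real_of_int k > real M / ((real m - 1 - real m * \<gamma>) * real M - real m * real c)
                          * (real h + 1)"
  shows "\<exists>A :: nat \<Rightarrow> 'a poly.
           (\<forall>i\<in>{1..m}. pseudopoly k (A i) \<and> degree (A i) < M * CARD('a)) \<and>
           (\<exists>i\<in>{1..m}. A i \<noteq> 0) \<and>
           (\<Sum>i=1..m. A i * F i) = 0"
proof -
  define q where "q = CARD('a)"
  have q2: "q \<ge> 2" using card_ge2[where 'a='a] q_def by simp
  define Bad where "Bad = {\<alpha>::'a. \<exists>i\<in>{1..m}. \<exists>j\<in>{1..m}. r i \<alpha> \<noteq> r j \<alpha>}"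
  define S where "S = UNIV - Bad"
  have Bq: "card Bad \<le> q" unfolding q_def by (rule card_mono) auto
  have cardS: "card S = q - card Bad" unfolding S_def q_def by (simp add: card_Diff_subset)
  have ar1: "c * q < M * (q - card Bad)" "m \<ge> 2" "c < M"
    "(real m - 1 - real m * \<gamma>) * real M - real m * real c > 0"
    using arith1[of m c M \<gamma> q "card Bad"] assms q2 Bq unfolding Bad_def q_def by auto
  have kpos: "k > 0"
  proof -
    have "real M / ((real m - 1 - real m * \<gamma>) * real M - real m * real c) * (real h + 1) > 0"
      using ar1(4) assms by simp
    thus ?thesis using assms(10) by linarith
  qed
  show ?thesis
  proof (cases "k \<ge> int q - 1")
    case True
    have pp: "pseudopoly k p" for p :: "'a poly"
      by (rule all_pseudopoly) (use True q_def in simp)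
    have cM: "c * q \<le> M * q" using ar1(3) by simp
    show ?thesis
    proof (cases "F 1 = 0")
      case True
      define A where "A = (\<lambda>i::nat. if i = 1 then (1::'a poly) else 0)"
      have "(\<Sum>i=1..m. A i * F i) = (\<Sum>i\<in>{1}. A i * F i)"
        by (rule sum.mono_neutral_right) (use assms(1) in \<open>auto simp: A_def\<close>)
      also have "\<dots> = 0" using True by (simp add: A_def)
      finally have s: "(\<Sum>i=1..m. A i * F i) = 0" .
      have "\<forall>i\<in>{1..m}. pseudopoly k (A i) \<and> degree (A i) < M * CARD('a)"
        using pp assms(4) by (auto simp: A_def)
      moreover have "\<exists>i\<in>{1..m}. A i \<noteq> 0" using assms(1) by (intro bexI[of _ 1]) (auto simp: A_def)
      ultimately show ?thesis using s by blast
    next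
      case False
      define A where "A = (\<lambda>i::nat. if i = 1 then F 2 else if i = 2 then - F 1 else 0)"
      have "(\<Sum>i=1..m. A i * F i) = (\<Sum>i\<in>{1,2}. A i * F i)"
        by (rule sum.mono_neutral_right) (use ar1(2) in \<open>auto simp: A_def\<close>)
      also have "\<dots> = 0" by (simp add: A_def mult.commute)
      finally have s: "(\<Sum>i=1..m. A i * F i) = 0" .
      have dF: "degree (F i) < M * q" if "i \<in> {1..m}" for i
      proof -
        have "degree (F i) < c * q" using assms(8) that unfolding q_def by blast
        thus ?thesis using cM by linarith
      qed
      have "\<forall>i\<in>{1..m}. pseudopoly k (A i) \<and> degree (A i) < M * CARD('a)"
      proof
        fix i assume i: "i \<in> {1..m}"
        have "degree (A i) < M * q"
        proof -
          have "2 \<in> {1..m}" "1 \<in> {1..m}" using ar1(2) by auto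
          thus ?thesis using dF assms(4) q2 by (auto simp: A_def)
        qed
        thus "pseudopoly k (A i) \<and> degree (A i) < M * CARD('a)" using pp q_def by simp
      qed
      moreover have "\<exists>i\<in>{1..m}. A i \<noteq> 0" using ar1(2) False by (intro bexI[of _ 2]) (auto simp: A_def)
      ultimately show ?thesis using s by blast
    qed
  next
    case False
    define kn where "kn = nat k"
    have k_kn: "k = int kn" using kpos kn_def by simp
    have knq: "kn < q" using False k_kn by simp
    define D where "D = M * card S - c * q"
    have D1: "D \<ge> 1" using ar1(1) cardS D_def by simp
    have DMq: "D \<le> M * q"
    proof -
      have "M * card S \<le> M * q" using cardS by simp
      thus ?thesis unfolding D_def by linarith
    qed
    have DcS: "D + c * q = M * card S" using ar1(1) cardS D_def by simp
    define J where "J = {(a, j). a \<le> kn \<and> a + j * q < D}"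
    have finJ: "finite J" unfolding J_def using finite_J q2 by simp
    have cJ: "M * (kn + h + 1) < m * card J"
    proof -
      have hJ: "kn * D \<le> q * card J" unfolding J_def by (rule card_J_bound[OF knq])
      have hk: "real kn > real M / ((real m - 1 - real m * \<gamma>) * real M - real m * real c) * (real h + 1)"
        using assms(10) k_kn by simp
      have a: "real (card Bad) \<le> \<gamma> * real q" using assms(7) unfolding Bad_def q_def .
      have hD: "D = M * (q - card Bad) - c * q" using D_def cardS by simp
      have q0: "q > 0" using q2 by simp
      show ?thesis
        by (rule arith2[OF assms(1) assms(2) assms(4) assms(5) q0 Bq a ar1(4) hk hJ hD ar1(1)])
    qed
    define b where "b = (\<lambda>t::nat \<times> nat. [:0,1:]^(fst t) * Lam^(snd t) :: 'a poly)"
    have b_nz: "b t \<noteq> 0" for t unfolding b_def using Lam_nz[where 'a='a] by (simp add: power_not_zero)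
    have b_deg: "degree (b t) = fst t + snd t * q" for t
      unfolding b_def q_def using Lam_nz[where 'a='a] by (simp add: degree_mult_eq degree_power_eq degree_Lam power_not_zero)
    have b_inj: "inj_on (\<lambda>t. degree (b t)) J"
    proof (rule inj_onI)
      fix s t assume s: "s \<in> J" and t: "t \<in> J" and e: "degree (b s) = degree (b t)"
      have "fst s < q" "fst t < q" using s t knq unfolding J_def by auto
      hence "(fst s + snd s * q) mod q = fst s" "(fst t + snd t * q) mod q = fst t" by simp_all
      moreover have "(fst s + snd s * q) div q = snd s" "(fst t + snd t * q) div q = snd t"
        using \<open>fst s < q\<close> \<open>fst t < q\<close> by simp_all
      ultimately show "s = t" using e b_deg by (metis prod_eq_iff)
    qed
    have b_degD: "degree (b t) \<le> D - 1" if "t \<in> J" for t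
    proof -
      have "fst t + snd t * q < D" using that unfolding J_def by (auto split: prod.splits)
      thus ?thesis using b_deg[of t] by linarith
    qed
    have b_pd: "degree (pseudoderiv l (b t)) \<le> kn" if "t \<in> J" for t l
    proof -
      have "fst t \<le> kn" using that J_def by auto
      hence "fst t < CARD('a)" using knq q_def by simp
      hence "degree (pseudoderiv l (b t)) \<le> fst t" unfolding b_def by (rule pseudoderiv_XLam)
      thus ?thesis using \<open>fst t \<le> kn\<close> by simp
    qed
    define Agen where "Agen = (\<lambda>(g::nat \<times> (nat \<times> nat) \<Rightarrow> 'a) i. \<Sum>t\<in>J. smult (g (i, t)) (b t))"
    have Agen_deg: "degree (Agen g i) \<le> D - 1" for g i
      unfolding Agen_def
    proof (rule degree_sum_le[OF finJ])
      fix t assume "t \<in> J"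
      thus "degree (smult (g (i, t)) (b t)) \<le> D - 1" using degree_smult_le b_degD order_trans by blast
    qed
    have Agen_pd: "degree (pseudoderiv l (Agen g i)) \<le> kn" for g i l
      unfolding Agen_def pseudoderiv_sum pseudoderiv_smult
    proof (rule degree_sum_le[OF finJ])
      fix t assume "t \<in> J"
      thus "degree (smult (g (i, t)) (pseudoderiv l (b t))) \<le> kn" using degree_smult_le b_pd order_trans by blast
    qed
    define U where "U = (\<lambda>i l. SOME U. degree U \<le> h \<and> (\<forall>\<alpha>. poly (hasse l (F i)) \<alpha> = r i \<alpha> * poly U \<alpha>))"
    have Uprop: "degree (U i l) \<le> h \<and> (\<forall>\<alpha>. poly (hasse l (F i)) \<alpha> = r i \<alpha> * poly (U i l) \<alpha>)"
      if "i \<in> {1..m}" "l < M" for i l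
    proof -
      have "\<exists>U. degree U \<le> h \<and> (\<forall>\<alpha>. poly (hasse l (F i)) \<alpha> = r i \<alpha> * poly U \<alpha>)"
        using assms(9) that unfolding twisted_pseudopoly_def by blast
      thus ?thesis unfolding U_def by (rule someI_ex)
    qed
    define H where "H = (\<lambda>l (A::nat \<Rightarrow> 'a poly). \<Sum>i\<in>{1..m}. \<Sum>a\<le>l. pseudoderiv a (A i) * U i (l - a))"
    define \<Psi> where "\<Psi> = (\<lambda>g l. if l < M then H l (Agen g) else 0)"
    define Dom where "Dom = PiE ({1..m} \<times> J) (\<lambda>_. UNIV :: 'a set)"
    define Tgt where "Tgt = {f :: nat \<Rightarrow> 'a poly. \<forall>l. (l < M \<longrightarrow> degree (f l) \<le> kn + h) \<and> (M \<le> l \<longrightarrow> f l = 0)}"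
    have Tgt: "finite Tgt" "card Tgt \<le> q ^ (M * (kn + h + 1))"
      using card_Tgt[of M "kn + h"] unfolding Tgt_def q_def by auto
    have img: "\<Psi> ` Dom \<subseteq> Tgt"
    proof
      fix f assume "f \<in> \<Psi> ` Dom"
      then obtain g where f: "f = \<Psi> g" by auto
      have "degree (H l (Agen g)) \<le> kn + h" if "l < M" for l
        unfolding H_def
      proof (intro degree_sum_le)
        fix i a assume i: "i \<in> {1..m}" and a: "a \<in> {..l}"
        have "degree (pseudoderiv a (Agen g i) * U i (l - a)) \<le> degree (pseudoderiv a (Agen g i)) + degree (U i (l - a))"
          by (rule degree_mult_le)
        also have "\<dots> \<le> kn + h" using Agen_pd Uprop[OF i] that by (intro add_mono) auto
        finally show "degree (pseudoderiv a (Agen g i) * U i (l - a)) \<le> kn + h" .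
      qed auto
      thus "f \<in> Tgt" unfolding f Tgt_def \<Psi>_def by auto
    qed
    have finDom: "finite Dom" unfolding Dom_def using finJ by (intro finite_PiE) auto
    have cardDom: "card Dom = q ^ (m * card J)"
      unfolding Dom_def q_def using finJ by (simp add: card_PiE card_cartesian_product)
    have "card Tgt < card Dom"
    proof -
      have "q ^ (M * (kn + h + 1)) < q ^ (m * card J)"
        using cJ q2 by (intro power_strict_increasing) auto
      thus ?thesis using Tgt cardDom by simp
    qed
    have "\<not> inj_on \<Psi> Dom"
    proof
      assume "inj_on \<Psi> Dom"
      hence "card (\<Psi> ` Dom) = card Dom" by (rule card_image)
      moreover have "card (\<Psi> ` Dom) \<le> card Tgt" using img Tgt by (intro card_mono) auto
      ultimately show False using \<open>card Tgt < card Dom\<close> by simp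
    qed
    then obtain g g' where gD: "g \<in> Dom" "g' \<in> Dom" and gne: "g \<noteq> g'" and \<Psi>eq: "\<Psi> g = \<Psi> g'"
      unfolding inj_on_def by blast
    define C where "C = (\<lambda>i. Agen g i - Agen g' i)"
    have C_alt: "C i = (\<Sum>t\<in>J. smult (g (i, t) - g' (i, t)) (b t))" for i
      unfolding C_def Agen_def by (simp add: sum_subtractf smult_diff_left)
    have HC: "H l C = 0" if "l < M" for l
    proof -
      have "H l C = H l (Agen g) - H l (Agen g')"
        unfolding H_def C_def by (simp add: pseudoderiv_diff left_diff_distrib sum_subtractf)
      also have "\<dots> = 0" using fun_cong[OF \<Psi>eq, of l] that unfolding \<Psi>_def by simp
      finally show ?thesis .
    qed
    have P1: "\<forall>i\<in>{1..m}. pseudopoly k (C i) \<and> degree (C i) < M * CARD('a)"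
    proof
      fix i assume i: "i \<in> {1..m}"
      have "pseudopoly k (C i)"
        unfolding pseudopoly_def
      proof
        fix l
        have "degree (pseudoderiv l (C i)) \<le> kn"
          unfolding C_def pseudoderiv_diff using Agen_pd by (intro degree_diff_le) auto
        thus "int (degree (pseudoderiv l (C i))) \<le> k" using k_kn by simp
      qed
      moreover have "degree (C i) \<le> D - 1"
        unfolding C_def using Agen_deg by (intro degree_diff_le) auto
      ultimately show "pseudopoly k (C i) \<and> degree (C i) < M * CARD('a)"
        using D1 DMq q_def by simp
    qed
    have P2: "\<exists>i\<in>{1..m}. C i \<noteq> 0"
    proof -
      obtain x where x: "g x \<noteq> g' x" using gne by (meson ext)
      have "x \<in> {1..m} \<times> J"
      proof (rule ccontr)
        assume "x \<notin> {1..m} \<times> J"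
        hence "g x = undefined" "g' x = undefined" using gD unfolding Dom_def by auto
        thus False using x by simp
      qed
      then obtain i t where it: "x = (i, t)" "i \<in> {1..m}" "t \<in> J" by auto
      have "C i \<noteq> 0"
      proof
        assume "C i = 0"
        hence "\<forall>t\<in>J. g (i, t) - g' (i, t) = 0"
          using indep_distinct_degrees[OF finJ _ b_inj, of "\<lambda>t. g (i, t) - g' (i, t)"] b_nz C_alt
          by auto
        thus False using it x by auto
      qed
      thus ?thesis using it by auto
    qed
    have P3: "(\<Sum>i=1..m. C i * F i) = 0"
    proof (rule ccontr)
      define G where "G = (\<Sum>i=1..m. C i * F i)"
      assume "(\<Sum>i=1..m. C i * F i) \<noteq> 0"
      hence Gnz: "G \<noteq> 0" unfolding G_def .
      have vanish: "[:-\<alpha>, 1:]^M dvd G" if \<alpha>: "\<alpha> \<in> S" for \<alpha>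
      proof (rule taylor_dvd, intro allI impI)
        fix l assume l: "l < M"
        have nb: "\<alpha> \<notin> Bad" using \<alpha> unfolding S_def by simp
        have one: "(1::nat) \<in> {1..m}" using assms(1) by simp
        have good: "r i \<alpha> = r 1 \<alpha>" if "i \<in> {1..m}" for i
          using nb that one unfolding Bad_def by blast
        have "poly (hasse l G) \<alpha> = (\<Sum>i=1..m. \<Sum>a\<le>l. poly (hasse a (C i)) \<alpha> * poly (hasse (l - a) (F i)) \<alpha>)"
          unfolding G_def hasse_sum hasse_mult poly_sum poly_mult ..
        also have "\<dots> = (\<Sum>i=1..m. \<Sum>a\<le>l. r 1 \<alpha> * (poly (pseudoderiv a (C i)) \<alpha> * poly (U i (l - a)) \<alpha>))"
        proof (intro sum.cong refl)
          fix i a assume i: "i \<in> {1..m}" and a: "a \<in> {..l}"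
          have "poly (hasse (l - a) (F i)) \<alpha> = r i \<alpha> * poly (U i (l - a)) \<alpha>"
            using Uprop[OF i] l by auto
          thus "poly (hasse a (C i)) \<alpha> * poly (hasse (l - a) (F i)) \<alpha> =
                r 1 \<alpha> * (poly (pseudoderiv a (C i)) \<alpha> * poly (U i (l - a)) \<alpha>)"
            unfolding poly_pseudoderiv good[OF i] by (simp only: mult_ac)
        qed
        also have "\<dots> = r 1 \<alpha> * poly (H l C) \<alpha>"
          unfolding H_def poly_sum poly_mult sum_distrib_left ..
        also have "\<dots> = 0" using HC[OF l] by simp
        finally show "poly (hasse l G) \<alpha> = 0" .
      qed
      have "M * card S \<le> degree G"
        by (rule mult_count) (use vanish Gnz in auto)
      moreover have "degree G \<le> (D - 1) + (c * q - 1)"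
        unfolding G_def
      proof (intro degree_sum_le)
        fix i assume i: "i \<in> {1..m}"
        have "degree (C i * F i) \<le> degree (C i) + degree (F i)" by (rule degree_mult_le)
        moreover have "degree (C i) \<le> D - 1" unfolding C_def using Agen_deg by (intro degree_diff_le) auto
        moreover have "degree (F i) \<le> c * q - 1" using assms(8) i q_def by fastforce
        ultimately show "degree (C i * F i) \<le> (D - 1) + (c * q - 1)" by linarith
      qed auto
      moreover have "c * q \<ge> 1" using assms(2) q2 by simp
      ultimately show False using DcS D1 by linarith
    qed
    show ?thesis using P1 P2 P3 by blast
  qed
qed


end
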